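(* Let $T=(F_0,F_1)$ be the template of order $10$ and type $(4,4,4,4)$ (relational rows $0$–$3$, relational columns $0$–$3$) in which the entry in row $i$, column $j$ is the pair $F_0[i,j]F_1[i,j]$ given by row 0: 11 00 00 00 01 01 01 10 10 10; row 1: 00 11 00 00 01 01 01 10 10 10; row 2: 00 00 11 00 10 10 10 01 01 01; row 3: 00 00 00 11 10 10 10 01 01 01; row 4: 10 10 01 01 11 11 00 00 00 00; row 5: 10 10 01 01 11 11 00 00 00 00; row 6: 10 10 01 01 00 00 11 11 00 00; row 7: 01 01 10 10 00 00 11 11 00 00; row 8: 01 01 10 10 00 00 00 00 11 11; row 9: 01 01 10 10 00 00 00 00 11 11. Then there is no $4$-net of order $10$ that is a refinement of $T$.
   Context: A $k$-net of order $n$: a set of $n^2$ points and $kn$ lines (subsets of size $n$), each point on $k$ lines, lines partitioned into $k$ parallel classes $\Pi_0,\dots,\Pi_{k-1}$ of $n$ pairwise disjoint lines, lines from different classes meeting in exactly one point. For $n$ even and even $\lambda_i$, a template of order $n$ and type $(\lambda_0,\dots,\lambda_{k-1})$ is a list $(F_0,\dots,F_{k-3})$ of $n\times n$ $\{0,1\}$-arrays, $F_{t-2}$ having exactly $\lambda_t$ ones in each row and column, mutually orthogonal (for $F,F'$ with $\lambda,\mu$ ones per row, each pair $(a,b)$ occurs in exactly $f_af'_b$ cells with $f_1=\lambda,f_0=n-\lambda,f'_1=\mu,f'_0=n-\mu$), with rows $0,\dots,\lambda_0-1$ and columns $0,\dots,\lambda_1-1$ called relational, and such that for each cell $(i,j)$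 the number of ones among $x,y,F_0[i,j],\dots,F_{k-3}[i,j]$ (where $x=1$ iff row $i$ relational, $y=1$ iff column $j$ relational) is congruent to $\frac12\sum\lambda_i$ mod $2$. A $k$-net $N$ with parallel classes $\Pi_0,\dots,\Pi_{k-1}$ is a refinement of $T$ if the lines of $\Pi_0$ and $\Pi_1$ can be labelled $0,\dots,n-1$ so that, identifying each point with the cell (label of its $\Pi_0$-line, label of its $\Pi_1$-line), for every $t\ge 2$ each line of $\Pi_t$ consists of cells on which $F_{t-2}$ is constant. *)

theory Defs
  imports Main
begin

definition is_net :: "nat \<Rightarrow> nat \<Rightarrow> 'a set \<Rightarrow> (nat \<Rightarrow> 'a set set) \<Rightarrow> bool" where
  "is_net k n P Pi \<longleftrightarrow>
     finite P \<and> card P = n ^ 2 \<and>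
     (\<forall>t<k. card (Pi t) = n \<and> (\<forall>L\<in>Pi t. L \<subseteq> P \<and> card L = n)) \<and>
     (\<forall>t<k. \<forall>L\<in>Pi t. \<forall>M\<in>Pi t. L \<noteq> M \<longrightarrow> L \<inter> M = {}) \<and>
     (\<forall>t<k. \<forall>s<k. t \<noteq> s \<longrightarrow> Pi t \<inter> Pi s = {}) \<and>
     card (\<Union>t<k. Pi t) = k * n \<and>
     (\<forall>p\<in>P. card {L \<in> (\<Union>t<k. Pi t). p \<in> L} = k) \<and>
     (\<forall>t<k. \<forall>s<k. t \<noteq> s \<longrightarrow> (\<forall>L\<in>Pi t. \<forall>M\<in>Pi s. card (L \<inter> M) = 1))"

text \<open>A k-net (P, Pi) is a refinement of the template F = (F 0, ..., F (k-3)) of order n: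
  the lines of Pi 0 and Pi 1 can be labelled 0..n-1 (labellings l0, l1) so that for every t \<ge> 2
  each line of Pi t consists of cells on which F (t-2) is constant; the cell of a point p is (i,j)
  where p lies on l0 i and on l1 j.\<close>
definition is_refinement :: "nat \<Rightarrow> nat \<Rightarrow> (nat \<Rightarrow> nat \<Rightarrow> nat \<Rightarrow> nat) \<Rightarrow> 'a set \<Rightarrow> (nat \<Rightarrow> 'a set set) \<Rightarrow> bool" where
  "is_refinement k n F P Pi \<longleftrightarrow>
     (\<exists>l0 l1. bij_betw l0 {0..<n} (Pi 0) \<and> bij_betw l1 {0..<n} (Pi 1) \<and>
        (\<forall>t. 2 \<le> t \<and> t < k \<longrightarrow> (\<forall>L\<in>Pi t. \<forall>p\<in>L. \<forall>q\<in>L. \<forall>i j i' j'.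
            i < n \<and> j < n \<and> i' < n \<and> j' < n \<and>
            p \<in> l0 i \<and> p \<in> l1 j \<and> q \<in> l0 i' \<and> q \<in> l1 j' \<longrightarrow>
            F (t - 2) i j = F (t - 2) i' j')))"

text \<open>The template of order 10 and type (4,4,4,4): entry code ab stands for F_0[i,j]=a, F_1[i,j]=b
  (written as the decimal number 10a+b).\<close>
definition T_codes :: "nat list list" where
  "T_codes = [
    [11, 0, 0, 0, 1, 1, 1,10,10,10],
    [ 0,11, 0, 0, 1, 1, 1,10,10,10],
    [ 0, 0,11, 0,10,10,10, 1, 1, 1],
    [ 0, 0, 0,11,10,10,10, 1, 1, 1],
    [10,10, 1, 1,11,11, 0, 0, 0, 0],
    [10,10, 1, 1,11,11, 0, 0, 0, 0],
    [10,10, 1, 1, 0, 0,11,11, 0, 0],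
    [ 1, 1,10,10, 0, 0,11,11, 0, 0],
    [ 1, 1,10,10, 0, 0, 0, 0,11,11],
    [ 1, 1,10,10, 0, 0, 0, 0,11,11]]"

definition T_F :: "nat \<Rightarrow> nat \<Rightarrow> nat \<Rightarrow> nat" where
  "T_F m i j = (if m = 0 then (T_codes ! i ! j) div 10 else (T_codes ! i ! j) mod 10)"

end

theory Submission
  imports Defs
begin
lemma i10: "i<(10::nat) \<Longrightarrow> i=0 \<or> i=1 \<or> i=2 \<or> i=3 \<or> i=4 \<or> i=5 \<or> i=6 \<or> i=7 \<or> i=8 \<or> i=9"
  by presburger

lemma row0L: "{j. j<(10::nat) \<and> T_F 1 0 j = 1} = {0,4,5,6}"
proof (rule set_eqI)
  fix j :: nat
  show "j \<in> {j. j<(10::nat) \<and> T_F 1 0 j = 1} \<longleftrightarrow> j \<in> {0,4,5,6}"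
  proof (cases "j < 10")
    case True
    then show ?thesis using i10[OF True] by (elim disjE) (simp_all add: T_F_def T_codes_def)
  qed auto
qed

lemma rowF0_0: "{j. j<(10::nat) \<and> T_F 0 0 j = 1} = {0,7,8,9}"
proof (rule set_eqI)
  fix j :: nat
  show "j \<in> {j. j<(10::nat) \<and> T_F 0 0 j = 1} \<longleftrightarrow> j \<in> {0,7,8,9}"
  proof (cases "j < 10")
    case True
    then show ?thesis using i10[OF True] by (elim disjE) (simp_all add: T_F_def T_codes_def)
  qed auto
qed

lemma rowF0_1: "{j. j<(10::nat) \<and> T_F 0 1 j = 1} = {1,7,8,9}"
proof (rule set_eqI)
  fix j :: nat
  show "j \<in> {j. j<(10::nat) \<and> T_F 0 1 j = 1} \<longleftrightarrow> j \<in> {1,7,8,9}"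
  proof (cases "j < 10")
    case True
    then show ?thesis using i10[OF True] by (elim disjE) (simp_all add: T_F_def T_codes_def)
  qed auto
qed

lemma rowF0_2: "{j. j<(10::nat) \<and> T_F 0 2 j = 1} = {2,4,5,6}"
proof (rule set_eqI)
  fix j :: nat
  show "j \<in> {j. j<(10::nat) \<and> T_F 0 2 j = 1} \<longleftrightarrow> j \<in> {2,4,5,6}"
  proof (cases "j < 10")
    case True
    then show ?thesis using i10[OF True] by (elim disjE) (simp_all add: T_F_def T_codes_def)
  qed auto
qed

lemma rowF0_3: "{j. j<(10::nat) \<and> T_F 0 3 j = 1} = {3,4,5,6}"
proof (rule set_eqI)
  fix j :: nat
  show "j \<in> {j. j<(10::nat) \<and> T_F 0 3 j = 1} \<longleftrightarrow> j \<in> {3,4,5,6}"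
  proof (cases "j < 10")
    case True
    then show ?thesis using i10[OF True] by (elim disjE) (simp_all add: T_F_def T_codes_def)
  qed auto
qed

lemma rowF0_4: "{j. j<(10::nat) \<and> T_F 0 4 j = 1} = {0,1,4,5}"
proof (rule set_eqI)
  fix j :: nat
  show "j \<in> {j. j<(10::nat) \<and> T_F 0 4 j = 1} \<longleftrightarrow> j \<in> {0,1,4,5}"
  proof (cases "j < 10")
    case True
    then show ?thesis using i10[OF True] by (elim disjE) (simp_all add: T_F_def T_codes_def)
  qed auto
qed

lemma rowF0_5: "{j. j<(10::nat) \<and> T_F 0 5 j = 1} = {0,1,4,5}"
proof (rule set_eqI)
  fix j :: nat
  show "j \<in> {j. j<(10::nat) \<and> T_F 0 5 j = 1} \<longleftrightarrow> j \<in> {0,1,4,5}"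
  proof (cases "j < 10")
    case True
    then show ?thesis using i10[OF True] by (elim disjE) (simp_all add: T_F_def T_codes_def)
  qed auto
qed

lemma rowF0_7: "{j. j<(10::nat) \<and> T_F 0 7 j = 1} = {2,3,6,7}"
proof (rule set_eqI)
  fix j :: nat
  show "j \<in> {j. j<(10::nat) \<and> T_F 0 7 j = 1} \<longleftrightarrow> j \<in> {2,3,6,7}"
  proof (cases "j < 10")
    case True
    then show ?thesis using i10[OF True] by (elim disjE) (simp_all add: T_F_def T_codes_def)
  qed auto
qed

lemma rowF0_8: "{j. j<(10::nat) \<and> T_F 0 8 j = 1} = {2,3,8,9}"
proof (rule set_eqI)
  fix j :: nat
  show "j \<in> {j. j<(10::nat) \<and> T_F 0 8 j = 1} \<longleftrightarrow> j \<in> {2,3,8,9}"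
  proof (cases "j < 10")
    case True
    then show ?thesis using i10[OF True] by (elim disjE) (simp_all add: T_F_def T_codes_def)
  qed auto
qed

lemma rowF0_9: "{j. j<(10::nat) \<and> T_F 0 9 j = 1} = {2,3,8,9}"
proof (rule set_eqI)
  fix j :: nat
  show "j \<in> {j. j<(10::nat) \<and> T_F 0 9 j = 1} \<longleftrightarrow> j \<in> {2,3,8,9}"
  proof (cases "j < 10")
    case True
    then show ?thesis using i10[OF True] by (elim disjE) (simp_all add: T_F_def T_codes_def)
  qed auto
qed

lemma tf066: "T_F 0 6 6 = 1" by (simp add: T_F_def T_codes_def)

lemma arith_h: "(A::nat)+B = X+Y \<Longrightarrow> C+D = X+Y \<Longrightarrow> C+D+1 = E+F+G \<Longrightarrow> A+B+C+D+X+Y+1+E+F+G \<noteq> 4"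
proof -
  assume h: "(A::nat)+B = X+Y" "C+D = X+Y" "C+D+1 = E+F+G"
  have "A+B+C+D+X+Y+1+E+F+G = (A+B)+(C+D)+(X+Y)+(E+F+G)+1" by (simp add: algebra_simps)
  also have "\<dots> = (X+Y)+(X+Y)+(X+Y)+(X+Y+1)+1" by (simp only: h(1,2) h(3)[symmetric])
  also have "\<dots> = 4*(X+Y)+2" by simp
  finally have e: "A+B+C+D+X+Y+1+E+F+G = 4*(X+Y)+2" .
  have "4*(X+Y)+2 \<noteq> (4::nat)" by presburger
  then show ?thesis using e by simp
qed

lemma E1L:
  fixes x0 x1 x4 x5 :: nat
  assumes "x0 = 0 \<or> x0 = 7 \<or> x0 = 8 \<or> x0 = 9" "x1 = 1 \<or> x1 = 7 \<or> x1 = 8 \<or> x1 = 9"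
    "x4 = 0 \<or> x4 = 1 \<or> x4 = 4 \<or> x4 = 5" "x5 = 0 \<or> x5 = 1 \<or> x5 = 4 \<or> x5 = 5"
    "x0 = 0 \<or> x1 = 0 \<or> x4 = 0 \<or> x5 = 0" "x0 = 1 \<or> x1 = 1 \<or> x4 = 1 \<or> x5 = 1"
    "x0 \<noteq> x4" "x0 \<noteq> x5" "x1 \<noteq> x4" "x1 \<noteq> x5" "x4 \<noteq> x5"
  shows "of_bool (x0 = 0) + of_bool (x1 = 1) = (of_bool (x4 = 4 \<or> x4 = 5) + of_bool (x5 = 4 \<or> x5 = 5) :: nat)"
  using assms(3,4,11) apply (elim disjE; simp)
  using assms(1,2,5-10) by auto
lemma E2L:
  fixes x2 x3 x4 x5 :: nat
  assumes "x2 = 2 \<or> x2 = 4 \<or> x2 = 5" "x3 = 3 \<or> x3 = 4 \<or> x3 = 5"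
    "x4 = 0 \<or> x4 = 1 \<or> x4 = 4 \<or> x4 = 5" "x5 = 0 \<or> x5 = 1 \<or> x5 = 4 \<or> x5 = 5"
    "x2 = 4 \<or> x3 = 4 \<or> x4 = 4 \<or> x5 = 4" "x2 = 5 \<or> x3 = 5 \<or> x4 = 5 \<or> x5 = 5"
    "x2 \<noteq> x3" "x2 \<noteq> x4" "x2 \<noteq> x5" "x3 \<noteq> x4" "x3 \<noteq> x5" "x4 \<noteq> x5"
  shows "of_bool (x2 = 2) + of_bool (x3 = 3) = (of_bool (x4 = 4 \<or> x4 = 5) + of_bool (x5 = 4 \<or> x5 = 5) :: nat)"
  using assms(3,4,12) apply (elim disjE; simp)
  using assms(1,2,5-11) by auto
lemma E3L:
  fixes x2 x3 x7 x8 x9 :: nat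
  assumes "x2 = 2 \<or> x2 = 4 \<or> x2 = 5" "x3 = 3 \<or> x3 = 4 \<or> x3 = 5" "x7 = 2 \<or> x7 = 3 \<or> x7 = 7"
    "x8 = 2 \<or> x8 = 3 \<or> x8 = 8 \<or> x8 = 9" "x9 = 2 \<or> x9 = 3 \<or> x9 = 8 \<or> x9 = 9"
    "x2 = 2 \<or> x3 = 2 \<or> x7 = 2 \<or> x8 = 2 \<or> x9 = 2" "x2 = 3 \<or> x3 = 3 \<or> x7 = 3 \<or> x8 = 3 \<or> x9 = 3"
    "x2 \<noteq> x3" "x2 \<noteq> x7" "x2 \<noteq> x8" "x2 \<noteq> x9" "x3 \<noteq> x7" "x3 \<noteq> x8" "x3 \<noteq> x9"
    "x7 \<noteq> x8" "x7 \<noteq> x9" "x8 \<noteq> x9"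
  shows "of_bool (x2 = 2) + of_bool (x3 = 3) + 1 = (of_bool (x7 = 7) + of_bool (x8 = 8 \<or> x8 = 9) + of_bool (x9 = 8 \<or> x9 = 9) :: nat)"
  using assms(3,4,5,15,16,17) apply (elim disjE; simp)
  using assms(1,2,6-14) by auto

lemma core:
  fixes a :: "nat \<Rightarrow> nat"
  assumes h0: "a 0 \<in> {0,7,8,9}" and h1: "a 1 \<in> {1,7,8,9}" and h2: "a 2 \<in> {2,4,5,6}"
    and h3: "a 3 \<in> {3,4,5,6}" and h4: "a 4 \<in> {0,1,4,5}" and h5: "a 5 \<in> {0,1,4,5}"
    and h6: "a 6 = 6" and h7: "a 7 \<in> {2,3,6,7}" and h8: "a 8 \<in> {2,3,8,9}" and h9: "a 9 \<in> {2,3,8,9}"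
    and d: "distinct [a 0, a 1, a 2, a 3, a 4, a 5, a 6, a 7, a 8, a 9]"
    and c0: "0 \<in> {a 0, a 1, a 4, a 5}" and c1: "1 \<in> {a 0, a 1, a 4, a 5}"
    and c4: "4 \<in> {a 2, a 3, a 4, a 5}" and c5: "5 \<in> {a 2, a 3, a 4, a 5}"
    and c2: "2 \<in> {a 2, a 3, a 7, a 8, a 9}" and c3: "3 \<in> {a 2, a 3, a 7, a 8, a 9}"
  shows "card {i. i<10 \<and> T_F 1 i (a i) = 1} \<noteq> 4"
proof -
  have e: "{i. i<(10::nat) \<and> T_F 1 i (a i) = 1} = {i\<in>{0,1,2,3,4,5,6,7,8,9}. T_F 1 i (a i) = 1}"
    by auto
  have c: "card {i\<in>A. Q i} = (\<Sum>i\<in>A. if Q i then 1 else 0)" if "finite A" for A :: "nat set" and Q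
  proof -
    have "{i\<in>A. Q i} = A \<inter> {i. Q i}" by blast
    then show ?thesis using that by (simp add: sum.If_cases)
  qed
  have dd: "a 6 \<noteq> a 2" "a 6 \<noteq> a 3" "a 6 \<noteq> a 7" "a 0 \<noteq> a 1" "a 0 \<noteq> a 4" "a 0 \<noteq> a 5"
    "a 1 \<noteq> a 4" "a 1 \<noteq> a 5" "a 4 \<noteq> a 5" "a 2 \<noteq> a 3" "a 2 \<noteq> a 4" "a 2 \<noteq> a 5"
    "a 3 \<noteq> a 4" "a 3 \<noteq> a 5" "a 2 \<noteq> a 7" "a 2 \<noteq> a 8" "a 2 \<noteq> a 9" "a 3 \<noteq> a 7"
    "a 3 \<noteq> a 8" "a 3 \<noteq> a 9" "a 7 \<noteq> a 8" "a 7 \<noteq> a 9" "a 8 \<noteq> a 9"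
    using d by auto
  have h2': "a 2 \<in> {2,4,5}" using h2 h6 dd(1) by auto
  have h3': "a 3 \<in> {3,4,5}" using h3 h6 dd(2) by auto
  have h7': "a 7 \<in> {2,3,7}" using h7 h6 dd(3) by auto
  have h0d: "a 0 = 0 \<or> a 0 = 7 \<or> a 0 = 8 \<or> a 0 = 9" using h0 by simp
  have h1d: "a 1 = 1 \<or> a 1 = 7 \<or> a 1 = 8 \<or> a 1 = 9" using h1 by simp
  have h2'd: "a 2 = 2 \<or> a 2 = 4 \<or> a 2 = 5" using h2' by simp
  have h3'd: "a 3 = 3 \<or> a 3 = 4 \<or> a 3 = 5" using h3' by simp
  have h4d: "a 4 = 0 \<or> a 4 = 1 \<or> a 4 = 4 \<or> a 4 = 5" using h4 by simp
  have h5d: "a 5 = 0 \<or> a 5 = 1 \<or> a 5 = 4 \<or> a 5 = 5" using h5 by simp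
  have h7'd: "a 7 = 2 \<or> a 7 = 3 \<or> a 7 = 7" using h7' by simp
  have h8d: "a 8 = 2 \<or> a 8 = 3 \<or> a 8 = 8 \<or> a 8 = 9" using h8 by simp
  have h9d: "a 9 = 2 \<or> a 9 = 3 \<or> a 9 = 8 \<or> a 9 = 9" using h9 by simp
  have c0d: "a 0 = 0 \<or> a 1 = 0 \<or> a 4 = 0 \<or> a 5 = 0" using c0 by auto
  have c1d: "a 0 = 1 \<or> a 1 = 1 \<or> a 4 = 1 \<or> a 5 = 1" using c1 by auto
  have c4d: "a 2 = 4 \<or> a 3 = 4 \<or> a 4 = 4 \<or> a 5 = 4" using c4 by auto
  have c5d: "a 2 = 5 \<or> a 3 = 5 \<or> a 4 = 5 \<or> a 5 = 5" using c5 by auto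
  have c2d: "a 2 = 2 \<or> a 3 = 2 \<or> a 7 = 2 \<or> a 8 = 2 \<or> a 9 = 2" using c2 by auto
  have c3d: "a 2 = 3 \<or> a 3 = 3 \<or> a 7 = 3 \<or> a 8 = 3 \<or> a 9 = 3" using c3 by auto
  have E1: "of_bool (a 0 = 0) + of_bool (a 1 = 1) = (of_bool (a 4 = 4 \<or> a 4 = 5) + of_bool (a 5 = 4 \<or> a 5 = 5) :: nat)"
    by (rule E1L[OF h0d h1d h4d h5d c0d c1d dd(5) dd(6) dd(7) dd(8) dd(9)])
  have E2: "of_bool (a 2 = 2) + of_bool (a 3 = 3) = (of_bool (a 4 = 4 \<or> a 4 = 5) + of_bool (a 5 = 4 \<or> a 5 = 5) :: nat)"
    by (rule E2L[OF h2'd h3'd h4d h5d c4d c5d dd(10) dd(11) dd(12) dd(13) dd(14) dd(9)])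
  have E3: "of_bool (a 2 = 2) + of_bool (a 3 = 3) + 1 = (of_bool (a 7 = 7) + of_bool (a 8 = 8 \<or> a 8 = 9) + of_bool (a 9 = 8 \<or> a 9 = 9) :: nat)"
    by (rule E3L[OF h2'd h3'd h7'd h8d h9d c2d c3d dd(10) dd(15) dd(16) dd(17) dd(18) dd(19) dd(20) dd(21) dd(22) dd(23)])
  have t0: "(if T_F 1 0 (a 0) = 1 then 1 else 0) = (of_bool (a 0 = 0) :: nat)"
    using h0 by (auto simp: T_F_def T_codes_def)
  have t1: "(if T_F 1 1 (a 1) = 1 then 1 else 0) = (of_bool (a 1 = 1) :: nat)"
    using h1 by (auto simp: T_F_def T_codes_def)
  have t2: "(if T_F 1 2 (a 2) = 1 then 1 else 0) = (of_bool (a 2 = 2) :: nat)"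
    using h2' by (auto simp: T_F_def T_codes_def)
  have t3: "(if T_F 1 3 (a 3) = 1 then 1 else 0) = (of_bool (a 3 = 3) :: nat)"
    using h3' by (auto simp: T_F_def T_codes_def)
  have t4: "(if T_F 1 4 (a 4) = 1 then 1 else 0) = (of_bool (a 4 = 4 \<or> a 4 = 5) :: nat)"
    using h4 by (auto simp: T_F_def T_codes_def)
  have t5: "(if T_F 1 5 (a 5) = 1 then 1 else 0) = (of_bool (a 5 = 4 \<or> a 5 = 5) :: nat)"
    using h5 by (auto simp: T_F_def T_codes_def)
  have t7: "(if T_F 1 7 (a 7) = 1 then 1 else 0) = (of_bool (a 7 = 7) :: nat)"
    using h7' by (auto simp: T_F_def T_codes_def)
  have t8: "(if T_F 1 8 (a 8) = 1 then 1 else 0) = (of_bool (a 8 = 8 \<or> a 8 = 9) :: nat)"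
    using h8 by (auto simp: T_F_def T_codes_def)
  have t9: "(if T_F 1 9 (a 9) = 1 then 1 else 0) = (of_bool (a 9 = 8 \<or> a 9 = 9) :: nat)"
    using h9 by (auto simp: T_F_def T_codes_def)
  have t6: "(if T_F 1 6 (a 6) = 1 then 1 else 0) = (1::nat)" using h6 by (simp add: T_F_def T_codes_def)
  have t: "(\<Sum>i\<in>{0,1,2,3,4,5,6,7,8,9::nat}. if T_F 1 i (a i) = 1 then 1 else 0) =
     (of_bool (a 0 = 0) + of_bool (a 1 = 1) + of_bool (a 2 = 2) + of_bool (a 3 = 3) + of_bool (a 4 = 4 \<or> a 4 = 5)
      + of_bool (a 5 = 4 \<or> a 5 = 5) + 1 + of_bool (a 7 = 7) + of_bool (a 8 = 8 \<or> a 8 = 9) + of_bool (a 9 = 8 \<or> a 9 = 9) :: nat)"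
    by (simp only: sum.insert_if finite.emptyI finite_insert insert_iff empty_iff sum.empty t0 t1 t2 t3 t4 t5 t6 t7 t8 t9) (simp add: add.assoc)
  have "(\<Sum>i\<in>{0,1,2,3,4,5,6,7,8,9::nat}. if T_F 1 i (a i) = 1 then 1 else 0) \<noteq> (4::nat)"
    unfolding t using arith_h[OF E1 E2 E3] .
  then show ?thesis unfolding e by (subst c) auto
qed

lemma card1_eq:
  assumes "card X = 1" "x \<in> X" "y \<in> X" shows "x = y"
proof -
  have "card X = Suc 0" using assms(1) by simp
  then obtain z where "X = {z}" by (auto simp only: card_1_singleton_iff)
  then show ?thesis using assms(2,3) by simp
qed

theorem mainTheorem5:
  fixes P :: "'a set" and Pi :: "nat \<Rightarrow> 'a set set"
  shows "\<not> (is_net 4 10 P Pi \<and> is_refinement 4 10 T_F P Pi)"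
proof
  assume A: "is_net 4 10 P Pi \<and> is_refinement 4 10 T_F P Pi"
  from A have net: "is_net 4 10 P Pi" and ref: "is_refinement 4 10 T_F P Pi" by simp_all
  from ref obtain l0 l1 where LL: "bij_betw l0 {0..<10} (Pi 0) \<and> bij_betw l1 {0..<10} (Pi 1) \<and>
        (\<forall>t. 2 \<le> t \<and> t < 4 \<longrightarrow> (\<forall>L\<in>Pi t. \<forall>p\<in>L. \<forall>q\<in>L. \<forall>i j i' j'.
            i < 10 \<and> j < 10 \<and> i' < 10 \<and> j' < 10 \<and>
            p \<in> l0 i \<and> p \<in> l1 j \<and> q \<in> l0 i' \<and> q \<in> l1 j' \<longrightarrow>
            T_F (t - 2) i j = T_F (t - 2) i' j'))"
    unfolding is_refinement_def by (elim exE) (rule that)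
  have b0: "bij_betw l0 {0..<10} (Pi 0)" using LL by (rule conjunct1)
  have b1: "bij_betw l1 {0..<10} (Pi 1)" using LL[THEN conjunct2] by (rule conjunct1)
  have rf: "\<forall>t. 2 \<le> t \<and> t < 4 \<longrightarrow> (\<forall>L\<in>Pi t. \<forall>p\<in>L. \<forall>q\<in>L. \<forall>i j i' j'.
            i < 10 \<and> j < 10 \<and> i' < 10 \<and> j' < 10 \<and>
            p \<in> l0 i \<and> p \<in> l1 j \<and> q \<in> l0 i' \<and> q \<in> l1 j' \<longrightarrow>
            T_F (t - 2) i j = T_F (t - 2) i' j')" using LL[THEN conjunct2] by (rule conjunct2)
  have N: "finite P \<and> card P = 10 ^ 2 \<and>
     (\<forall>t<4. card (Pi t) = 10 \<and> (\<forall>L\<in>Pi t. L \<subseteq> P \<and> card L = 10)) \<and>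
     (\<forall>t<4. \<forall>L\<in>Pi t. \<forall>M\<in>Pi t. L \<noteq> M \<longrightarrow> L \<inter> M = {}) \<and>
     (\<forall>t<4. \<forall>s<4. t \<noteq> s \<longrightarrow> Pi t \<inter> Pi s = {}) \<and>
     card (\<Union>t<4. Pi t) = 4 * 10 \<and>
     (\<forall>p\<in>P. card {L \<in> (\<Union>t<4. Pi t). p \<in> L} = 4) \<and>
     (\<forall>t<4. \<forall>s<4. t \<noteq> s \<longrightarrow> (\<forall>L\<in>Pi t. \<forall>M\<in>Pi s. card (L \<inter> M) = 1))"
    using net unfolding is_net_def .
  have finP: "finite P" using N by (rule conjunct1)
  have cardP0: "card P = 10 ^ 2" using N by (elim conjE) assumption
  have cardP: "card P = 100" using cardP0 by simp
  have N3: "\<forall>t<4. card (Pi t) = 10 \<and> (\<forall>L\<in>Pi t. L \<subseteq> P \<and> card L = 10)"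
    using N by (elim conjE) assumption
  have N4: "\<forall>t<4. \<forall>L\<in>Pi t. \<forall>M\<in>Pi t. L \<noteq> M \<longrightarrow> L \<inter> M = {}"
    using N by (elim conjE) assumption
  have N8: "\<forall>t<4. \<forall>s<4. t \<noteq> s \<longrightarrow> (\<forall>L\<in>Pi t. \<forall>M\<in>Pi s. card (L \<inter> M) = 1)"
    using N by (elim conjE) assumption
  have cls: "card (Pi t) = 10 \<and> (\<forall>L\<in>Pi t. L \<subseteq> P \<and> card L = 10)" if "t<4" for t
    using N3 that by blast
  have dsj: "L \<inter> M = {}" if "t<4" "L\<in>Pi t" "M\<in>Pi t" "L \<noteq> M" for t L M
    using N4 that by blast
  have meet: "card (L \<inter> M) = 1" if "t<4" "s<4" "t \<noteq> s" "L\<in>Pi t" "M\<in>Pi s" for t s L M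
    using N8 that by blast
  have rf2: "T_F (t - 2) i j = T_F (t - 2) i' j'" if "2 \<le> t" "t < 4" "L\<in>Pi t" "p\<in>L" "q\<in>L"
            "i < 10" "j < 10" "i' < 10" "j' < 10"
            "p \<in> l0 i" "p \<in> l1 j" "q \<in> l0 i'" "q \<in> l1 j'" for t L p q i j i' j'
    using rf[rule_format, of t L p q i j i' j'] that by blast
  have finPi: "finite (Pi t)" if "t<4" for t
  proof (rule card_ge_0_finite)
    show "card (Pi t) > 0" using cls[OF that] by simp
  qed
  have cover: "\<Union>(Pi t) = P" if t: "t<4" for t
  proof -
    have finL: "\<And>L. L\<in>Pi t \<Longrightarrow> finite L" using cls[OF t] finP finite_subset by blast
    have pw: "pairwise disjnt (Pi t)" using dsj[OF t] by (auto simp: pairwise_def disjnt_def)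
    have "card (\<Union>(Pi t)) = sum card (Pi t)" using card_Union_disjoint[OF pw] finL by blast
    also have "\<dots> = sum (\<lambda>_. 10) (Pi t)" using cls[OF t] by (intro sum.cong) auto
    also have "\<dots> = 100" using cls[OF t] by simp
    finally have c: "card (\<Union>(Pi t)) = card P" using cardP by simp
    have "\<Union>(Pi t) \<subseteq> P" using cls[OF t] by blast
    then show ?thesis using card_subset_eq[OF finP _ c] by blast
  qed
  have l0P: "l0 i \<in> Pi 0" if "i<10" for i using b0 that by (auto simp: bij_betw_def)
  have l1P: "l1 i \<in> Pi 1" if "i<10" for i using b1 that by (auto simp: bij_betw_def)
  have l0s: "l0 i \<subseteq> P" if "i<10" for i using cls[of 0] l0P[OF that] by auto
  have u0: "i = i'" if "i<10" "i'<10" "p \<in> l0 i" "p \<in> l0 i'" for i i' p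
  proof (rule ccontr)
    assume "i \<noteq> i'"
    then have "l0 i \<noteq> l0 i'" using b0 that(1,2) by (auto simp: bij_betw_def inj_on_def)
    then show False using dsj[of 0 "l0 i" "l0 i'"] l0P that by auto
  qed
  have u1: "j = j'" if "j<10" "j'<10" "p \<in> l1 j" "p \<in> l1 j'" for j j' p
  proof (rule ccontr)
    assume "j \<noteq> j'"
    then have "l1 j \<noteq> l1 j'" using b1 that(1,2) by (auto simp: bij_betw_def inj_on_def)
    then show False using dsj[of 1 "l1 j" "l1 j'"] l1P that by auto
  qed
  have in0: "\<exists>i<10. p \<in> l0 i" if "p \<in> P" for p
  proof -
    from that cover[of 0] obtain L where "L \<in> Pi 0" "p \<in> L" by auto
    moreover have "Pi 0 = l0 ` {0..<10}" using b0 by (auto simp: bij_betw_def)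
    ultimately show ?thesis by auto
  qed
  have in1: "\<exists>j<10. p \<in> l1 j" if "p \<in> P" for p
  proof -
    from that cover[of 1] obtain L where "L \<in> Pi 1" "p \<in> L" by auto
    moreover have "Pi 1 = l1 ` {0..<10}" using b1 by (auto simp: bij_betw_def)
    ultimately show ?thesis by auto
  qed
  define pt where "pt i j = the_elem (l0 i \<inter> l1 j)" for i j
  have pt: "l0 i \<inter> l1 j = {pt i j}" if "i<10" "j<10" for i j
  proof -
    have "card (l0 i \<inter> l1 j) = 1" using meet[of 0 1 "l0 i" "l1 j"] l0P l1P that by auto
    then obtain q where "l0 i \<inter> l1 j = {q}" by (auto simp: card_1_singleton_iff)
    then show ?thesis by (simp add: pt_def)
  qed
  have ptm: "pt i j \<in> l0 i \<and> pt i j \<in> l1 j \<and> pt i j \<in> P" if "i<10" "j<10" for i j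
    using pt[OF that] l0s[OF that(1)] by auto
  have pteq: "q = pt i j" if "q \<in> l0 i" "q \<in> l1 j" "i<10" "j<10" for q i j
    using pt[OF that(3,4)] that(1,2) by auto
  have cell: "\<exists>i<10. \<exists>j<10. q = pt i j" if "q \<in> P" for q
    using in0[OF that] in1[OF that] pteq by blast
  define S where "S = {q\<in>P. \<exists>i<10. \<exists>j<10. q = pt i j \<and> T_F 1 i j = 1}"
  have aon: "M \<subseteq> S" if M: "M \<in> Pi 3" and x: "x \<in> M" "x \<in> S" for M x
  proof
    fix y assume y: "y \<in> M"
    from x obtain i j where ij: "i<10" "j<10" "x = pt i j" "T_F 1 i j = 1" unfolding S_def by auto
    have yP: "y \<in> P" using cls[of 3] M y by auto
    then obtain i' j' where ij': "i'<10" "j'<10" "y = pt i' j'" using cell by blast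
    have "T_F (3-2) i j = T_F (3-2) i' j'"
      by (rule rf2[of 3 M x y]) (use M x y ij ij' ptm in auto)
    then show "y \<in> S" using ij ij' yP unfolding S_def by auto
  qed
  define M3 where "M3 = {M \<in> Pi 3. M \<subseteq> S}"
  have cnt: "card (X \<inter> S) = card M3" if X: "X \<subseteq> P" "\<forall>M\<in>Pi 3. card (X \<inter> M) = 1" for X
  proof -
    have eq: "X \<inter> S = (\<Union>M\<in>M3. X \<inter> M)"
    proof
      show "X \<inter> S \<subseteq> (\<Union>M\<in>M3. X \<inter> M)"
      proof
        fix x assume x: "x \<in> X \<inter> S"
        then have "x \<in> P" using X by auto
        then obtain M where "M \<in> Pi 3" "x \<in> M" using cover[of 3] by auto
        then show "x \<in> (\<Union>M\<in>M3. X \<inter> M)" using aon x unfolding M3_def by blast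
      qed
      show "(\<Union>M\<in>M3. X \<inter> M) \<subseteq> X \<inter> S" unfolding M3_def by blast
    qed
    have fM3: "finite M3" using finPi[of 3] unfolding M3_def by auto
    have "card (\<Union>M\<in>M3. X \<inter> M) = (\<Sum>M\<in>M3. card (X \<inter> M))"
      apply (rule card_UN_disjoint[OF fM3])
      using X finP finite_subset apply blast
    proof (intro ballI impI)
      fix M M' assume "M \<in> M3" "M' \<in> M3" "M \<noteq> M'"
      then have "M \<inter> M' = {}" using dsj[of 3 M M'] unfolding M3_def by simp
      then show "X \<inter> M \<inter> (X \<inter> M') = {}" by blast
    qed
    also have "\<dots> = (\<Sum>M\<in>M3. 1)" using X unfolding M3_def by (intro sum.cong) auto
    finally show ?thesis using eq by simp
  qed
  note row0 = row0L
  have c0: "card (l0 0 \<inter> S) = 4"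
  proof -
    have "l0 0 \<inter> S = pt 0 ` {0,4,5,6}"
    proof
      show "l0 0 \<inter> S \<subseteq> pt 0 ` {0,4,5,6}"
      proof
        fix x assume x: "x \<in> l0 0 \<inter> S"
        then obtain i j where ij: "i<10" "j<10" "x = pt i j" "T_F 1 i j = 1" unfolding S_def by blast
        have xi: "x \<in> l0 i" using ptm[OF ij(1,2)] ij(3) by simp
        have x0: "x \<in> l0 0" using x by simp
        have i0: "i = 0" using u0[of i 0 x] ij(1) xi x0 by simp
        have "j \<in> {j. j<(10::nat) \<and> T_F 1 0 j = 1}" using ij(2,4) i0 by simp
        then have "j \<in> {0,4,5,6}" by (simp only: row0)
        then show "x \<in> pt 0 ` {0,4,5,6}" using ij(3) i0 by blast
      qed
      show "pt 0 ` {0,4,5,6} \<subseteq> l0 0 \<inter> S"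
      proof
        fix y assume "y \<in> pt 0 ` {0,4,5,6}"
        then obtain j where j: "j \<in> {0,4,5,6}" "y = pt 0 j" by blast
        have "j \<in> {j. j<(10::nat) \<and> T_F 1 0 j = 1}" using j(1) by (simp only: row0)
        then have j10: "j < 10" and tj: "T_F 1 0 j = 1" by simp_all
        have "y \<in> l0 0" "y \<in> P" using ptm[of 0 j] j10 j(2) by simp_all
        moreover have "\<exists>i<10. \<exists>j'<10. y = pt i j' \<and> T_F 1 i j' = 1"
          by (rule exI[of _ 0]) (use j10 tj j(2) in auto)
        then have "y \<in> S" unfolding S_def using \<open>y \<in> P\<close> by blast
        ultimately show "y \<in> l0 0 \<inter> S" by simp
      qed
    qed
    moreover have "inj_on (pt 0) {0,4,5,6}"
    proof (rule inj_onI)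
      fix j j' assume jj: "j \<in> {0,4,5,6}" "j' \<in> {0,4,5,6}" "pt 0 j = pt 0 j'"
      then have j10: "j < 10" "j' < 10" by auto
      have "pt 0 j \<in> l1 j" "pt 0 j \<in> l1 j'" using ptm[of 0 j] ptm[of 0 j'] j10 jj(3) by simp_all
      then show "j = j'" using u1[of j j' "pt 0 j"] j10 by simp
    qed
    ultimately show ?thesis by (simp add: card_image)
  qed
  have l00: "l0 0 \<subseteq> P" "l0 0 \<in> Pi 0" using l0s[of 0] l0P[of 0] by simp_all
  have cM3: "card M3 = 4"
  proof -
    have "\<forall>M\<in>Pi 3. card (l0 0 \<inter> M) = 1" using meet[of 0 3 "l0 0"] l00(2) by simp
    then show ?thesis using cnt[OF l00(1)] c0 by simp
  qed
  obtain L where L: "L \<in> Pi 2" "pt 6 6 \<in> L"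
  proof -
    have "pt 6 6 \<in> \<Union>(Pi 2)" using cover[of 2] ptm[of 6 6] by simp
    then show ?thesis using that by blast
  qed
  have LP: "L \<subseteq> P" using cls[of 2] L(1) by simp
  have cL: "card (L \<inter> l0 i) = 1" if "i<10" for i using meet[of 2 0 L "l0 i"] L(1) l0P[OF that] by simp
  have cL1: "card (L \<inter> l1 i) = 1" if "i<10" for i using meet[of 2 1 L "l1 i"] L(1) l1P[OF that] by simp
  have exa: "\<exists>j<10. pt i j \<in> L" if i: "i<10" for i
  proof -
    have "card (L \<inter> l0 i) = Suc 0" using cL[OF i] by simp
    then obtain q where q: "L \<inter> l0 i = {q}" by (auto simp only: card_1_singleton_iff)
    then have qL: "q \<in> L" and ql: "q \<in> l0 i" by auto
    then have "q \<in> P" using LP by auto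
    then obtain i' j' where ij: "i'<10" "j'<10" "q = pt i' j'" using cell by blast
    have "q \<in> l0 i'" using ptm[OF ij(1,2)] ij(3) by simp
    then have "i' = i" using u0[of i' i q] ij(1) i ql by simp
    then show ?thesis using ij qL by blast
  qed
  define a where "a i = (SOME j. j<10 \<and> pt i j \<in> L)" for i
  have ha: "a i < 10 \<and> pt i (a i) \<in> L" if "i<10" for i
    using someI_ex[OF exa[OF that]] unfolding a_def by blast
  have a6: "a 6 = 6"
  proof -
    have h: "a 6 < 10" "pt 6 (a 6) \<in> L" using ha[of 6] by simp_all
    have m: "pt 6 (a 6) \<in> l0 6" "pt 6 (a 6) \<in> l1 (a 6)" using ptm[of 6 "a 6"] h(1) by simp_all
    have m6: "pt 6 6 \<in> l0 6" "pt 6 6 \<in> l1 6" using ptm[of 6 6] by simp_all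
    have "pt 6 (a 6) = pt 6 6"
      by (rule card1_eq[OF cL[of 6]]) (use h m m6 L in simp_all)
    then show ?thesis using u1[of "a 6" 6 "pt 6 6"] h(1) m m6 by simp
  qed
  have ainj: "inj_on a {..<10}"
  proof (rule inj_onI)
    fix i i' assume i: "i \<in> {..<10}" "i' \<in> {..<10}" and e: "a i = a i'"
    have i10: "i < 10" "i' < 10" using i by simp_all
    have h: "a i < 10" "pt i (a i) \<in> L" "pt i' (a i') \<in> L" using ha[of i] ha[of i'] i10 by simp_all
    have m: "pt i (a i) \<in> l0 i" "pt i (a i) \<in> l1 (a i)" using ptm[of i "a i"] h(1) i10 by simp_all
    have m': "pt i' (a i) \<in> l0 i'" "pt i' (a i) \<in> l1 (a i)" using ptm[of i' "a i"] h(1) i10 by simp_all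
    have "pt i (a i) = pt i' (a i)"
      by (rule card1_eq[OF cL1[OF h(1)]]) (use h m m' e in simp_all)
    then show "i = i'" using u0[of i i' "pt i (a i)"] i10 m m' by simp
  qed
  have F0: "T_F 0 i (a i) = 1" if i: "i<10" for i
  proof -
    have h: "a i < 10" "pt i (a i) \<in> L" using ha[OF i] by simp_all
    have m: "pt i (a i) \<in> l0 i" "pt i (a i) \<in> l1 (a i)" using ptm[of i "a i"] h(1) i by simp_all
    have m6: "pt 6 6 \<in> l0 6" "pt 6 6 \<in> l1 6" using ptm[of 6 6] by simp_all
    have "T_F (2-2) i (a i) = T_F (2-2) 6 6"
      by (rule rf2[of 2 L "pt i (a i)" "pt 6 6"]) (use L h m m6 i in simp_all)
    then show ?thesis using tf066 by simp
  qed
  have cS: "card (L \<inter> S) = 4"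
  proof -
    have "\<forall>M\<in>Pi 3. card (L \<inter> M) = 1" using meet[of 2 3 L] L(1) by simp
    then show ?thesis using cnt[OF LP] cM3 by simp
  qed
  have "L \<inter> S = (\<lambda>i. pt i (a i)) ` {i. i<10 \<and> T_F 1 i (a i) = 1}"
  proof
    show "L \<inter> S \<subseteq> (\<lambda>i. pt i (a i)) ` {i. i<10 \<and> T_F 1 i (a i) = 1}"
    proof
      fix x assume x: "x \<in> L \<inter> S"
      then obtain i j where ij: "i<10" "j<10" "x = pt i j" "T_F 1 i j = 1" unfolding S_def by blast
      have h: "a i < 10" "pt i (a i) \<in> L" using ha[OF ij(1)] by simp_all
      have m: "pt i (a i) \<in> l0 i" "pt i (a i) \<in> l1 (a i)" using ptm[of i "a i"] h(1) ij(1) by simp_all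
      have mj: "pt i j \<in> l0 i" "pt i j \<in> l1 j" using ptm[OF ij(1,2)] by simp_all
      have xL: "pt i j \<in> L" using x ij(3) by simp
      have "pt i j = pt i (a i)"
        by (rule card1_eq[OF cL[OF ij(1)]]) (use xL h m mj in simp_all)
      then have "j = a i" using u1[of j "a i" "pt i j"] ij(2) h(1) m mj by simp
      then show "x \<in> (\<lambda>i. pt i (a i)) ` {i. i<10 \<and> T_F 1 i (a i) = 1}" using ij by blast
    qed
    show "(\<lambda>i. pt i (a i)) ` {i. i<10 \<and> T_F 1 i (a i) = 1} \<subseteq> L \<inter> S"
    proof
      fix y assume "y \<in> (\<lambda>i. pt i (a i)) ` {i. i<10 \<and> T_F 1 i (a i) = 1}"
      then obtain i where i: "i < 10" "T_F 1 i (a i) = 1" "y = pt i (a i)" by blast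
      have h: "a i < 10" "pt i (a i) \<in> L" using ha[OF i(1)] by simp_all
      have yP: "y \<in> P" using ptm[of i "a i"] h(1) i(1,3) by simp
      have "y \<in> S" unfolding S_def using yP i h(1) by blast
      then show "y \<in> L \<inter> S" using h(2) i(3) by simp
    qed
  qed
  moreover have "inj_on (\<lambda>i. pt i (a i)) {i. i<10 \<and> T_F 1 i (a i) = 1}"
  proof (rule inj_onI)
    fix i i' assume i: "i \<in> {i. i<10 \<and> T_F 1 i (a i) = 1}" "i' \<in> {i. i<10 \<and> T_F 1 i (a i) = 1}"
      and e: "pt i (a i) = pt i' (a i')"
    have i10: "i < 10" "i' < 10" using i by simp_all
    have h: "a i < 10" "a i' < 10" using ha[of i] ha[of i'] i10 by simp_all
    have "pt i (a i) \<in> l0 i" "pt i' (a i') \<in> l0 i'" using ptm[of i "a i"] ptm[of i' "a i'"] h i10 by simp_all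
    then show "i = i'" using u0[of i i' "pt i (a i)"] i10 e by simp
  qed
  ultimately have card4: "card {i. i<10 \<and> T_F 1 i (a i) = 1} = 4"
    using cS by (simp add: card_image)
  have mem: "a i \<in> {j. j < 10 \<and> T_F 0 i j = 1}" if "i<10" for i using ha[OF that] F0[OF that] by simp
  have r0: "a 0 \<in> {0,7,8,9}" using mem[of 0] by (simp only: rowF0_0)
  have r1: "a 1 \<in> {1,7,8,9}" using mem[of 1] by (simp only: rowF0_1)
  have r2: "a 2 \<in> {2,4,5,6}" using mem[of 2] by (simp only: rowF0_2)
  have r3: "a 3 \<in> {3,4,5,6}" using mem[of 3] by (simp only: rowF0_3)
  have r4: "a 4 \<in> {0,1,4,5}" using mem[of 4] by (simp only: rowF0_4)
  have r5: "a 5 \<in> {0,1,4,5}" using mem[of 5] by (simp only: rowF0_5)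
  have r7: "a 7 \<in> {2,3,6,7}" using mem[of 7] by (simp only: rowF0_7)
  have r8: "a 8 \<in> {2,3,8,9}" using mem[of 8] by (simp only: rowF0_8)
  have r9: "a 9 \<in> {2,3,8,9}" using mem[of 9] by (simp only: rowF0_9)
  have "map a [0..<10] = [a 0, a 1, a 2, a 3, a 4, a 5, a 6, a 7, a 8, a 9]"
    by (simp add: upt_rec numeral_eq_Suc)
  moreover have "distinct (map a [0..<10])" using ainj by (simp add: distinct_map atLeast_upt)
  ultimately have d: "distinct [a 0, a 1, a 2, a 3, a 4, a 5, a 6, a 7, a 8, a 9]" by simp
  have sur: "a ` {..<10} = {..<10}"
    by (rule endo_inj_surj) (use ha ainj in auto)
  have col: "\<exists>i<10. a i = c" if "c<10" for c
    using that sur by (metis imageE lessThan_iff)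
  have c0: "0 \<in> {a 0, a 1, a 4, a 5}"
  proof -
    obtain i where hi: "i<10" "a i = 0" using col[of 0] by auto
    show ?thesis using i10[OF hi(1)] hi(2) r0 r1 r2 r3 r4 r5 a6 r7 r8 r9 by (elim disjE) simp_all
  qed
  have c1: "1 \<in> {a 0, a 1, a 4, a 5}"
  proof -
    obtain i where hi: "i<10" "a i = 1" using col[of 1] by auto
    show ?thesis using i10[OF hi(1)] hi(2) r0 r1 r2 r3 r4 r5 a6 r7 r8 r9 by (elim disjE) simp_all
  qed
  have c4: "4 \<in> {a 2, a 3, a 4, a 5}"
  proof -
    obtain i where hi: "i<10" "a i = 4" using col[of 4] by auto
    show ?thesis using i10[OF hi(1)] hi(2) r0 r1 r2 r3 r4 r5 a6 r7 r8 r9 by (elim disjE) simp_all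
  qed
  have c5: "5 \<in> {a 2, a 3, a 4, a 5}"
  proof -
    obtain i where hi: "i<10" "a i = 5" using col[of 5] by auto
    show ?thesis using i10[OF hi(1)] hi(2) r0 r1 r2 r3 r4 r5 a6 r7 r8 r9 by (elim disjE) simp_all
  qed
  have c2: "2 \<in> {a 2, a 3, a 7, a 8, a 9}"
  proof -
    obtain i where hi: "i<10" "a i = 2" using col[of 2] by auto
    show ?thesis using i10[OF hi(1)] hi(2) r0 r1 r2 r3 r4 r5 a6 r7 r8 r9 by (elim disjE) simp_all
  qed
  have c3: "3 \<in> {a 2, a 3, a 7, a 8, a 9}"
  proof -
    obtain i where hi: "i<10" "a i = 3" using col[of 3] by auto
    show ?thesis using i10[OF hi(1)] hi(2) r0 r1 r2 r3 r4 r5 a6 r7 r8 r9 by (elim disjE) simp_all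
  qed
  show False using core[OF r0 r1 r2 r3 r4 r5 a6 r7 r8 r9 d c0 c1 c4 c5 c2 c3] card4 by simp
qed

end
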